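(* Let $x\in\mathbb{R}^p$ have $\mathbb{E}[x]=0$, covariance $\Sigma$ and bounded fourth moments with constant $C_4$. Let $\Phi:\mathbb{R}\to\mathbb{R}$ be four times differentiable and $c(\sigma)>0$, and let $y$ be real-valued with, conditionally on $x$ and writing $\eta^*=\langle x,\theta^*\rangle$, $\mathbb{E}[y\mid x]=\Phi'(\eta^* )$ and $\mathbb{E}[(y-\Phi'(\eta^* ))^4\mid x]=c(\sigma)^3\Phi^{(4)}(\eta^* )+3c(\sigma)^2(\Phi''(\eta^* ))^2$ (as holds when $y\mid x$ has density proportional to $\exp((y\eta^*-\Phi(\eta^* ))/c(\sigma))$ with respect to a base measure). Assume there are constants $L_{\Phi,2k},B_{\Phi,2k}\ge0$ ($k=1,2$) with $\mathbb{E}_x|\Phi'(\langle x,\theta\rangle)-\Phi'(\langle x,\theta^*\rangle)|^{2k}\le L_{\Phi,2k}\|\theta-\theta^*\|_2^{2k}+B_{\Phi,2k}$ for all $\theta$, and constants $M_{\Phi,2,2},M_{\Phi,4,1}$ with $\mathbb{E}_x[|\Phi''(\eta^* )|^2]\le M_{\Phi,2,2}$, $\mathbb{E}_x[|\Phi^{(4)}(\eta^* )|]\le M_{\Phi,4,1}$. Let $\overline{\mathcal{L}}(\theta;(x,y))=-y\langle x,\theta\rangle+\Phi(\langle x,\theta\rangle)$ and $\Delta=\theta-\theta^*$. Then there are constants $C_1,C_2>0$ depending only on $C_4$ such that for all $\theta\in\mathbb{R}^p$, $$\|\operatorname{Cov}(\nabla_\theta\overline{\mathcal{L}}(\theta;(x,y)))\|_2\le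 C_1\|\Delta\|_2^2\|\Sigma\|_2\big(\sqrt{L_{\Phi,4}}+L_{\Phi,2}\big)+C_2\|\Sigma\|_2\Big(B_{\Phi,2}+\sqrt{B_{\Phi,4}}+c(\sigma)\sqrt{3M_{\Phi,2,2}}+\sqrt{c(\sigma)^3M_{\Phi,4,1}}\Big).$$
   Context: A random vector $x$ with mean $\mu$ has bounded $2k$-th moments with constant $C_{2k}$ if for every unit vector $v$, $\mathbb{E}[\langle x-\mu,v\rangle^{2k}]\le C_{2k}(\mathbb{E}[\langle x-\mu,v\rangle^2])^k$. Matrix norm $\|\cdot\|_2$ is the operator norm. *)

theory Defs
  imports "HOL-Probability.Probability"
begin

text \<open>Vectors of R^p are represented as functions nat => real of which only the
coordinates i < p matter. The joint law of (x,y) is a probability measure on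
(nat => real) x real; x = fst, y = snd.\<close>

definition ipv :: "nat \<Rightarrow> (nat \<Rightarrow> real) \<Rightarrow> (nat \<Rightarrow> real) \<Rightarrow> real" where
  "ipv p u v = (\<Sum>i<p. u i * v i)"

definition vnorm :: "nat \<Rightarrow> (nat \<Rightarrow> real) \<Rightarrow> real" where
  "vnorm p v = sqrt (ipv p v v)"

definition opnorm :: "nat \<Rightarrow> (nat \<Rightarrow> nat \<Rightarrow> real) \<Rightarrow> real" where
  "opnorm p A = Sup {vnorm p (\<lambda>i. \<Sum>j<p. A i j * v j) | v. vnorm p v \<le> 1}"

definition mean_vec :: "'a measure \<Rightarrow> ('a \<Rightarrow> nat \<Rightarrow> real) \<Rightarrow> nat \<Rightarrow> real" where
  "mean_vec M X = (\<lambda>i. \<integral>z. X z i \<partial>M)"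

definition cov_matrix :: "'a measure \<Rightarrow> ('a \<Rightarrow> nat \<Rightarrow> real) \<Rightarrow> nat \<Rightarrow> nat \<Rightarrow> real" where
  "cov_matrix M X = (\<lambda>i j. \<integral>z. (X z i - mean_vec M X i) * (X z j - mean_vec M X j) \<partial>M)"

definition bounded_moments ::
  "'a measure \<Rightarrow> nat \<Rightarrow> ('a \<Rightarrow> nat \<Rightarrow> real) \<Rightarrow> nat \<Rightarrow> real \<Rightarrow> bool" where
  "bounded_moments M p X k C \<longleftrightarrow>
     (\<forall>v. vnorm p v = 1 \<longrightarrow>
        (\<integral>z. (ipv p (\<lambda>i. X z i - mean_vec M X i) v) ^ (2*k) \<partial>M)
          \<le> C * (\<integral>z. (ipv p (\<lambda>i. X z i - mean_vec M X i) v) ^ 2 \<partial>M) ^ k)"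

definition Lbar :: "nat \<Rightarrow> (real \<Rightarrow> real) \<Rightarrow> (nat \<Rightarrow> real) \<Rightarrow> (nat \<Rightarrow> real) \<times> real \<Rightarrow> real" where
  "Lbar p \<Phi> \<theta> z = - snd z * ipv p (fst z) \<theta> + \<Phi> (ipv p (fst z) \<theta>)"

definition grad_Lbar :: "nat \<Rightarrow> (real \<Rightarrow> real) \<Rightarrow> (nat \<Rightarrow> real) \<Rightarrow> (nat \<Rightarrow> real) \<times> real \<Rightarrow> nat \<Rightarrow> real" where
  "grad_Lbar p \<Phi> \<theta> z = (\<lambda>i. deriv (\<lambda>t. Lbar p \<Phi> (\<theta>(i := t)) z) (\<theta> i))"

definition sigma_x :: "nat \<Rightarrow> ((nat \<Rightarrow> real) \<times> real) measure \<Rightarrow> ((nat \<Rightarrow> real) \<times> real) measure" where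
  "sigma_x p M = vimage_algebra (space M) fst (PiM {..<p} (\<lambda>_. borel))"

definition glm_hyps ::
  "nat \<Rightarrow> ((nat \<Rightarrow> real) \<times> real) measure \<Rightarrow> real \<Rightarrow>
   (real \<Rightarrow> real) \<Rightarrow> (real \<Rightarrow> real) \<Rightarrow> (real \<Rightarrow> real) \<Rightarrow> (real \<Rightarrow> real) \<Rightarrow> (real \<Rightarrow> real) \<Rightarrow>
   (nat \<Rightarrow> real) \<Rightarrow> real \<Rightarrow> real \<Rightarrow> real \<Rightarrow> real \<Rightarrow> real \<Rightarrow> real \<Rightarrow> real \<Rightarrow> bool" where
  "glm_hyps p M C4 \<Phi> \<Phi>1 \<Phi>2 \<Phi>3 \<Phi>4 \<theta>s c L2 L4 B2 B4 M22 M41 \<longleftrightarrow>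
     prob_space M \<and>
     sets M = sets (PiM {..<p} (\<lambda>_. borel) \<Otimes>\<^sub>M (borel :: real measure)) \<and>
     \<comment> \<open>x has finite fourth moments, mean zero, bounded fourth moments with constant C4\<close>
     (\<forall>i<p. integrable M (\<lambda>z. fst z i ^ 4)) \<and>
     (\<forall>i<p. (\<integral>z. fst z i \<partial>M) = 0) \<and>
     bounded_moments M p fst 2 C4 \<and>
     \<comment> \<open>Phi four times differentiable\<close>
     (\<forall>t. (\<Phi> has_real_derivative \<Phi>1 t) (at t)) \<and>
     (\<forall>t. (\<Phi>1 has_real_derivative \<Phi>2 t) (at t)) \<and>
     (\<forall>t. (\<Phi>2 has_real_derivative \<Phi>3 t) (at t)) \<and>
     (\<forall>t. (\<Phi>3 has_real_derivative \<Phi>4 t) (at t)) \<and>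
     c > 0 \<and>
     \<comment> \<open>conditional moments of y given x\<close>
     integrable M snd \<and>
     (AE z in M. real_cond_exp M (sigma_x p M) snd z = \<Phi>1 (ipv p (fst z) \<theta>s)) \<and>
     integrable M (\<lambda>z. (snd z - \<Phi>1 (ipv p (fst z) \<theta>s)) ^ 4) \<and>
     (AE z in M. real_cond_exp M (sigma_x p M) (\<lambda>z. (snd z - \<Phi>1 (ipv p (fst z) \<theta>s)) ^ 4) z
                 = c ^ 3 * \<Phi>4 (ipv p (fst z) \<theta>s) + 3 * c\<^sup>2 * (\<Phi>2 (ipv p (fst z) \<theta>s))\<^sup>2) \<and>
     \<comment> \<open>Lipschitz-type moment conditions on Phi'\<close>
     L2 \<ge> 0 \<and> L4 \<ge> 0 \<and> B2 \<ge> 0 \<and> B4 \<ge> 0 \<and>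
     (\<forall>\<theta>. integrable M (\<lambda>z. \<bar>\<Phi>1 (ipv p (fst z) \<theta>) - \<Phi>1 (ipv p (fst z) \<theta>s)\<bar> ^ 2) \<and>
          (\<integral>z. \<bar>\<Phi>1 (ipv p (fst z) \<theta>) - \<Phi>1 (ipv p (fst z) \<theta>s)\<bar> ^ 2 \<partial>M)
            \<le> L2 * vnorm p (\<lambda>i. \<theta> i - \<theta>s i) ^ 2 + B2) \<and>
     (\<forall>\<theta>. integrable M (\<lambda>z. \<bar>\<Phi>1 (ipv p (fst z) \<theta>) - \<Phi>1 (ipv p (fst z) \<theta>s)\<bar> ^ 4) \<and>
          (\<integral>z. \<bar>\<Phi>1 (ipv p (fst z) \<theta>) - \<Phi>1 (ipv p (fst z) \<theta>s)\<bar> ^ 4 \<partial>M)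
            \<le> L4 * vnorm p (\<lambda>i. \<theta> i - \<theta>s i) ^ 4 + B4) \<and>
     integrable M (\<lambda>z. \<bar>\<Phi>2 (ipv p (fst z) \<theta>s)\<bar> ^ 2) \<and>
     (\<integral>z. \<bar>\<Phi>2 (ipv p (fst z) \<theta>s)\<bar> ^ 2 \<partial>M) \<le> M22 \<and>
     integrable M (\<lambda>z. \<bar>\<Phi>4 (ipv p (fst z) \<theta>s)\<bar>) \<and>
     (\<integral>z. \<bar>\<Phi>4 (ipv p (fst z) \<theta>s)\<bar> \<partial>M) \<le> M41"

end

theory Submission
  imports Defs
begin


lemma int_bound_real:
  fixes f g :: "'a \<Rightarrow> real"
  assumes "integrable M g" "f \<in> borel_measurable M" "\<And>x. x \<in> space M \<Longrightarrow> \<bar>f x\<bar> \<le> g x"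
  shows "integrable M f"
proof (rule Bochner_Integration.integrable_bound[OF assms(1,2)])
  show "AE x in M. norm (f x) \<le> norm (g x)"
    using assms(3) by (intro AE_I2) fastforce
qed

lemma abs_le_1sq: "\<bar>t::real\<bar> \<le> 1 + t^2"
proof -
  have "0 \<le> (\<bar>t\<bar> - 1/2)^2" by simp
  also have "(\<bar>t\<bar> - 1/2)^2 = t^2 - \<bar>t\<bar> + 1/4"
    by (simp add: power2_eq_square algebra_simps)
  finally show ?thesis by linarith
qed

lemma fm_int_of_sq:
  fixes f :: "'a \<Rightarrow> real"
  assumes "finite_measure M" "f \<in> borel_measurable M" "integrable M (\<lambda>z. f z ^ 2)"
  shows "integrable M f"
proof -
  interpret finite_measure M by fact
  have "integrable M (\<lambda>z. 1 + f z ^ 2)" using assms by auto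
  then show ?thesis
  proof (rule int_bound_real)
    fix x
    show "\<bar>f x\<bar> \<le> 1 + (f x)\<^sup>2"
      by (rule abs_le_1sq)
  qed (rule assms)
qed

lemma abs_prod_le: "\<bar>(a::real) * b\<bar> \<le> a^2 + b^2"
proof -
  have "2 * (\<bar>a\<bar> * \<bar>b\<bar>) \<le> \<bar>a\<bar>^2 + \<bar>b\<bar>^2" using sum_squares_bound[of "\<bar>a\<bar>" "\<bar>b\<bar>"] by (simp add: power2_eq_square)
  moreover have "\<bar>a\<bar>^2 = a^2" "\<bar>b\<bar>^2 = b^2" by simp_all
  moreover have "0 \<le> \<bar>a\<bar> * \<bar>b\<bar>" by simp
  ultimately have "\<bar>a\<bar> * \<bar>b\<bar> \<le> a^2 + b^2" by linarith
  then show ?thesis by (simp add: abs_mult)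
qed

lemma int_prod_of_sq:
  fixes f g :: "'a \<Rightarrow> real"
  assumes "f \<in> borel_measurable M" "g \<in> borel_measurable M"
    "integrable M (\<lambda>z. f z ^ 2)" "integrable M (\<lambda>z. g z ^ 2)"
  shows "integrable M (\<lambda>z. f z * g z)"
proof -
  have "integrable M (\<lambda>z. f z ^ 2 + g z ^ 2)" using assms by auto
  then show ?thesis
    by (rule int_bound_real) (use assms abs_prod_le in auto)
qed

lemma sum_sq_le: "((a::real) + b)^2 \<le> 2 * a^2 + 2 * b^2"
proof -
  have "0 \<le> (a - b)^2" by simp
  then show ?thesis by (simp add: power2_eq_square algebra_simps)
qed

lemma sum_4_le: "((a::real) + b)^4 \<le> 8 * a^4 + 8 * b^4"
proof -
  have "(a+b)^4 = ((a+b)^2)^2" by simp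
  also have "\<dots> \<le> (2*a^2 + 2*b^2)^2" by (rule power_mono[OF sum_sq_le]) simp
  also have "\<dots> = 4 * (a^2 + b^2)^2" by (simp add: power2_eq_square algebra_simps)
  also have "\<dots> \<le> 4 * (2 * (a^2)^2 + 2 * (b^2)^2)" using sum_sq_le[of "a^2" "b^2"] by simp
  also have "\<dots> = 8 * a^4 + 8*b^4" by simp
  finally show ?thesis .
qed

lemma int_sum_sq:
  fixes f :: "'i \<Rightarrow> 'a \<Rightarrow> real"
  assumes "finite I" "\<And>i. i \<in> I \<Longrightarrow> f i \<in> borel_measurable M"
    "\<And>i. i \<in> I \<Longrightarrow> integrable M (\<lambda>z. f i z ^ 2)"
  shows "integrable M (\<lambda>z. (\<Sum>i\<in>I. f i z) ^ 2)"
  using assms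
proof (induction I rule: finite_induct)
  case empty then show ?case by simp
next
  case (insert j I)
  have "integrable M (\<lambda>z. 2 * f j z ^ 2 + 2 * (\<Sum>i\<in>I. f i z) ^ 2)"
    using insert by auto
  then show ?case
    by (rule int_bound_real) (use insert sum_sq_le in auto)
qed

lemma int_sum_4:
  fixes f :: "'i \<Rightarrow> 'a \<Rightarrow> real"
  assumes "finite I" "\<And>i. i \<in> I \<Longrightarrow> f i \<in> borel_measurable M"
    "\<And>i. i \<in> I \<Longrightarrow> integrable M (\<lambda>z. f i z ^ 4)"
  shows "integrable M (\<lambda>z. (\<Sum>i\<in>I. f i z) ^ 4)"
  using assms
proof (induction I rule: finite_induct)
  case empty then show ?case by simp
next
  case (insert j I)
  have "integrable M (\<lambda>z. 8 * f j z ^ 4 + 8 * (\<Sum>i\<in>I. f i z) ^ 4)"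
    using insert by auto
  then show ?case
  proof (rule int_bound_real)
    show "(\<lambda>z. (\<Sum>i\<in>insert j I. f i z)^4) \<in> borel_measurable M" using insert by auto
    have e: "\<And>a::real. \<bar>a^4\<bar> = a^4" by (simp add: zero_le_even_power)
    fix x
    show "\<bar>(\<Sum>i\<in>insert j I. f i x)^4\<bar> \<le> 8 * (f j x)^4 + 8 * (\<Sum>i\<in>I. f i x)^4"
      using insert(1,2) sum_4_le e by auto
  qed
qed

lemma int_CS:
  fixes f g :: "'a \<Rightarrow> real"
  assumes "f \<in> borel_measurable M" "g \<in> borel_measurable M"
    "integrable M (\<lambda>z. f z ^ 2)" "integrable M (\<lambda>z. g z ^ 2)"
  shows "(\<integral>z. f z * g z \<partial>M) \<le> sqrt (\<integral>z. f z ^ 2 \<partial>M) * sqrt (\<integral>z. g z ^ 2 \<partial>M)"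
proof -
  define A where "A = (\<integral>z. f z ^ 2 \<partial>M)"
  define B where "B = (\<integral>z. g z ^ 2 \<partial>M)"
  have A0: "A \<ge> 0" unfolding A_def by simp
  have B0: "B \<ge> 0" unfolding B_def by simp
  have key: "(\<integral>z. f z * g z \<partial>M) \<le> (s * A + B / s) / 2" if s: "s > 0" for s
  proof -
    have "(\<integral>z. f z * g z \<partial>M) \<le> (\<integral>z. (s * f z ^ 2 + g z ^ 2 / s) / 2 \<partial>M)"
    proof (rule integral_mono)
      show "integrable M (\<lambda>z. f z * g z)" by (rule int_prod_of_sq[OF assms])
      show "integrable M (\<lambda>z. (s * f z ^ 2 + g z ^ 2 / s) / 2)" using assms by auto
      fix z
      have "0 \<le> (s * f z - g z)^2 / s" using s by simp
      also have "(s * f z - g z)^2 / s = s * f z ^ 2 - 2 * f z * g z + g z ^ 2 / s"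
        using s by (simp add: power2_eq_square field_simps)
      finally show "f z * g z \<le> (s * f z ^ 2 + g z ^ 2 / s) / 2" by simp
    qed
    also have "\<dots> = (s * A + B / s) / 2"
      unfolding A_def B_def using assms by simp
    finally show ?thesis .
  qed
  show ?thesis
  proof (cases "A > 0 \<and> B > 0")
    case True
    define a where "a = sqrt A"
    define b where "b = sqrt B"
    have a: "a > 0" "A = a^2" using True unfolding a_def by auto
    have b: "b > 0" "B = b^2" using True unfolding b_def by auto
    have "(\<integral>z. f z * g z \<partial>M) \<le> ((b/a) * A + B / (b/a)) / 2"
      by (rule key) (use a b in simp)
    also have "\<dots> = a * b"
      using a b by (simp add: power2_eq_square field_simps)
    finally show ?thesis unfolding A_def B_def a_def b_def .
  next
    case False
    then have "A = 0 \<or> B = 0" using A0 B0 by auto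
    have "(\<integral>z. f z * g z \<partial>M) \<le> 0"
    proof (rule field_le_epsilon)
      fix e :: real assume e: "e > 0"
      show "(\<integral>z. f z * g z \<partial>M) \<le> 0 + e"
      proof (cases "A = 0")
        case True
        show ?thesis
        proof (cases "B > 0")
          case True
          have "(\<integral>z. f z * g z \<partial>M) \<le> (B / (2*e) * A + B / (B/(2*e))) / 2"
            using key[of "B/(2*e)"] True e by simp
          then show ?thesis using \<open>A = 0\<close> True e by simp
        next
          case False
          then show ?thesis using key[of 1] \<open>A = 0\<close> B0 e by simp
        qed
      next
        case False
        then have "B = 0" using \<open>A = 0 \<or> B = 0\<close> by auto
        have "(\<integral>z. f z * g z \<partial>M) \<le> ((e / A) * A + B / (e/A)) / 2"
          using key[of "e/A"] e A0 False by simp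
        then show ?thesis using \<open>B = 0\<close> False A0 e by simp
      qed
    qed
    moreover have "0 \<le> sqrt A * sqrt B" using A0 B0 by simp
    ultimately show ?thesis unfolding A_def B_def by linarith
  qed
qed



definition mv :: "nat \<Rightarrow> (nat \<Rightarrow> nat \<Rightarrow> real) \<Rightarrow> (nat \<Rightarrow> real) \<Rightarrow> nat \<Rightarrow> real" where
  "mv p A v = (\<lambda>i. \<Sum>j<p. A i j * v j)"

lemma ipv_cong: "(\<And>i. i < p \<Longrightarrow> u i = u' i) \<Longrightarrow> (\<And>i. i < p \<Longrightarrow> v i = v' i) \<Longrightarrow> ipv p u v = ipv p u' v'"
  unfolding ipv_def by (rule sum.cong) auto

lemma ipv_comm: "ipv p u v = ipv p v u"
  unfolding ipv_def by (simp add: mult.commute)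

lemma ipv_self_nonneg: "0 \<le> ipv p v v"
  unfolding ipv_def by (intro sum_nonneg) simp

lemma vnorm_nonneg: "0 \<le> vnorm p v"
  unfolding vnorm_def using ipv_self_nonneg by simp

lemma vnorm_sq: "vnorm p v ^ 2 = ipv p v v"
  unfolding vnorm_def using ipv_self_nonneg by simp

lemma ipv_CS: "ipv p u v \<le> vnorm p u * vnorm p v"
proof -
  have "(ipv p u v)^2 \<le> ipv p u u * ipv p v v"
    unfolding ipv_def using Cauchy_Schwarz_ineq_sum[of u v "{..<p}"] by (simp add: power2_eq_square)
  then have "sqrt ((ipv p u v)^2) \<le> sqrt (ipv p u u * ipv p v v)" by (rule real_sqrt_le_mono)
  then show ?thesis unfolding vnorm_def by (simp add: real_sqrt_mult)
qed

lemma vnorm_scale: "vnorm p (\<lambda>i. c * v i) = \<bar>c\<bar> * vnorm p v"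
proof -
  have "ipv p (\<lambda>i. c * v i) (\<lambda>i. c * v i) = c^2 * ipv p v v"
    unfolding ipv_def by (simp add: sum_distrib_left power2_eq_square algebra_simps)
  then show ?thesis unfolding vnorm_def by (simp add: real_sqrt_mult)
qed

lemma vnorm_zero: "vnorm p v = 0 \<Longrightarrow> i < p \<Longrightarrow> v i = 0"
proof -
  assume "vnorm p v = 0" "i < p"
  then have "(\<Sum>j<p. v j * v j) = 0" unfolding vnorm_def ipv_def by simp
  then have "\<forall>j\<in>{..<p}. v j * v j = 0" by (subst sum_nonneg_eq_0_iff[symmetric]) auto
  then show "v i = 0" using \<open>i < p\<close> by auto
qed

lemma comp_le_vnorm: "i < p \<Longrightarrow> \<bar>v i\<bar> \<le> vnorm p v"
proof -
  assume i: "i < p"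
  have "v i * v i \<le> (\<Sum>j<p. v j * v j)"
    using i by (intro member_le_sum) auto
  then have "sqrt ((v i)^2) \<le> vnorm p v" unfolding vnorm_def ipv_def
    by (intro real_sqrt_le_mono) (simp add: power2_eq_square)
  then show ?thesis by simp
qed

lemma mv_bdd: "bdd_above {vnorm p (\<lambda>i. \<Sum>j<p. A i j * v j) | v. vnorm p v \<le> 1}"
proof (rule bdd_aboveI)
  fix x assume "x \<in> {vnorm p (\<lambda>i. \<Sum>j<p. A i j * v j) | v. vnorm p v \<le> 1}"
  then obtain v where v: "vnorm p v \<le> 1" and x: "x = vnorm p (\<lambda>i. \<Sum>j<p. A i j * v j)" by auto
  have bi: "(\<Sum>j<p. A i j * v j)^2 \<le> (\<Sum>j<p. \<bar>A i j\<bar>)^2" for i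
  proof -
    have "\<bar>\<Sum>j<p. A i j * v j\<bar> \<le> (\<Sum>j<p. \<bar>A i j * v j\<bar>)" by (rule sum_abs)
    also have "\<dots> \<le> (\<Sum>j<p. \<bar>A i j\<bar>)"
    proof (rule sum_mono)
      fix j assume "j \<in> {..<p}"
      then have "\<bar>v j\<bar> \<le> 1" using comp_le_vnorm[of j p v] v by auto
      then show "\<bar>A i j * v j\<bar> \<le> \<bar>A i j\<bar>" by (simp add: abs_mult mult_left_le)
    qed
    finally have h: "\<bar>\<Sum>j<p. A i j * v j\<bar> \<le> (\<Sum>j<p. \<bar>A i j\<bar>)" .
    have "\<bar>\<Sum>j<p. A i j * v j\<bar> \<le> \<bar>\<Sum>j<p. \<bar>A i j\<bar>\<bar>" using h abs_ge_self[of "\<Sum>j<p. \<bar>A i j\<bar>"] by linarith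
    then show ?thesis by (simp only: abs_le_square_iff)
  qed
  have "x \<le> sqrt (\<Sum>i<p. (\<Sum>j<p. \<bar>A i j\<bar>)^2)"
    unfolding x vnorm_def ipv_def
    by (intro real_sqrt_le_mono sum_mono) (use bi in \<open>simp add: power2_eq_square\<close>)
  then show "x \<le> sqrt (\<Sum>i<p. (\<Sum>j<p. \<bar>A i j\<bar>)^2)" .
qed

lemma zero_mem: "vnorm p (\<lambda>i. \<Sum>j<p. A i j * (\<lambda>_. 0::real) j) \<in> {vnorm p (\<lambda>i. \<Sum>j<p. A i j * v j) | v. vnorm p v \<le> 1}"
proof -
  have z: "vnorm p (\<lambda>_. 0::real) \<le> 1" by (simp add: vnorm_def ipv_def)
  show ?thesis by (rule CollectI, rule exI[of _ "\<lambda>_. 0"]) (use z in simp)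
qed

lemma opnorm_nonneg: "0 \<le> opnorm p A"
proof -
  have "vnorm p (\<lambda>i. \<Sum>j<p. A i j * (\<lambda>_. 0::real) j) \<in> {vnorm p (\<lambda>i. \<Sum>j<p. A i j * v j) | v. vnorm p v \<le> 1}"
    by (rule zero_mem)
  then have "vnorm p (\<lambda>i. \<Sum>j<p. A i j * (\<lambda>_. 0::real) j) \<le> opnorm p A"
    unfolding opnorm_def by (rule cSup_upper[OF _ mv_bdd])
  then show ?thesis by (simp add: vnorm_def ipv_def)
qed

lemma opnorm_bound: "vnorm p (mv p A v) \<le> opnorm p A * vnorm p v"
proof (cases "vnorm p v = 0")
  case True
  then have "mv p A v i = 0" if "i < p" for i
    unfolding mv_def using vnorm_zero[OF True] by simp
  then have "vnorm p (mv p A v) = 0" unfolding vnorm_def ipv_def by simp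
  then show ?thesis using True by simp
next
  case False
  define n where "n = vnorm p v"
  have n: "n > 0" using False vnorm_nonneg[of p v] unfolding n_def by simp
  define u where "u = (\<lambda>i. (1/n) * v i)"
  have "vnorm p u = 1" unfolding u_def vnorm_scale n_def using n n_def by simp
  then have "vnorm p (\<lambda>i. \<Sum>j<p. A i j * u j) \<le> opnorm p A"
    unfolding opnorm_def by (intro cSup_upper[OF _ mv_bdd]) auto
  moreover have "(\<lambda>i. \<Sum>j<p. A i j * u j) = (\<lambda>i. (1/n) * mv p A v i)"
    unfolding u_def mv_def by (simp add: sum_distrib_left algebra_simps)
  moreover have "vnorm p (\<lambda>i. (1/n) * mv p A v i) = (1/n) * vnorm p (mv p A v)"
    using vnorm_scale[of p "1/n" "mv p A v"] n by simp
  ultimately have "(1/n) * vnorm p (mv p A v) \<le> opnorm p A"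
    by simp
  then show ?thesis using n unfolding n_def[symmetric] by (simp add: field_simps)
qed

lemma opnorm_le:
  assumes "\<And>v. vnorm p v \<le> 1 \<Longrightarrow> vnorm p (mv p A v) \<le> K"
  shows "opnorm p A \<le> K"
  unfolding opnorm_def
proof (rule cSup_least)
  show "{vnorm p (\<lambda>i. \<Sum>j<p. A i j * v j) |v. vnorm p v \<le> 1} \<noteq> {}"
    using zero_mem by blast
  fix x assume "x \<in> {vnorm p (\<lambda>i. \<Sum>j<p. A i j * v j) |v. vnorm p v \<le> 1}"
  then show "x \<le> K" using assms unfolding mv_def by auto
qed



lemma cov_bil:
  fixes Y :: "'a \<Rightarrow> nat \<Rightarrow> real"
  assumes ps: "prob_space M"
    and meas: "\<And>i. i < p \<Longrightarrow> (\<lambda>z. Y z i) \<in> borel_measurable M"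
    and sq: "\<And>i. i < p \<Longrightarrow> integrable M (\<lambda>z. Y z i ^ 2)"
  shows "ipv p w (mv p (cov_matrix M Y) v)
     = (\<integral>z. ipv p (\<lambda>i. Y z i - mean_vec M Y i) w * ipv p (\<lambda>i. Y z i - mean_vec M Y i) v \<partial>M)"
proof -
  interpret prob_space M by fact
  define D where "D = (\<lambda>z i. Y z i - mean_vec M Y i)"
  have Dm: "(\<lambda>z. D z i) \<in> borel_measurable M" if "i < p" for i
    unfolding D_def using meas[OF that] by measurable
  have Yi: "integrable M (\<lambda>z. Y z i)" if "i < p" for i
    by (rule fm_int_of_sq[OF _ meas[OF that] sq[OF that]]) unfold_locales
  have Dsq: "integrable M (\<lambda>z. D z i ^ 2)" if "i < p" for i
  proof -
    have "integrable M (\<lambda>z. Y z i ^ 2 + (mean_vec M Y i)^2 - 2 * Y z i * mean_vec M Y i)"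
      using sq[OF that] Yi[OF that] by auto
    then show ?thesis unfolding D_def by (simp add: power2_diff)
  qed
  have Dij: "integrable M (\<lambda>z. D z i * D z j)" if "i < p" "j < p" for i j
    by (rule int_prod_of_sq[OF Dm[OF that(1)] Dm[OF that(2)] Dsq[OF that(1)] Dsq[OF that(2)]])
  have "(\<integral>z. ipv p (D z) w * ipv p (D z) v \<partial>M)
      = (\<integral>z. (\<Sum>i<p. \<Sum>j<p. w i * v j * (D z i * D z j)) \<partial>M)"
    by (rule Bochner_Integration.integral_cong[OF refl], unfold ipv_def sum_product, intro sum.cong refl) (simp add: algebra_simps)
  also have "\<dots> = (\<Sum>i<p. \<integral>z. (\<Sum>j<p. w i * v j * (D z i * D z j)) \<partial>M)"
    by (rule Bochner_Integration.integral_sum[where f="\<lambda>i z. \<Sum>j<p. w i * v j * (D z i * D z j)"]) (use Dij in auto)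
  also have "\<dots> = (\<Sum>i<p. \<Sum>j<p. \<integral>z. w i * v j * (D z i * D z j) \<partial>M)"
  proof (rule sum.cong[OF refl])
    fix i assume "i \<in> {..<p}"
    then show "(\<integral>z. (\<Sum>j<p. w i * v j * (D z i * D z j)) \<partial>M) = (\<Sum>j<p. \<integral>z. w i * v j * (D z i * D z j) \<partial>M)"
      by (intro Bochner_Integration.integral_sum[where f="\<lambda>j z. w i * v j * (D z i * D z j)"]) (use Dij in auto)
  qed
  also have "\<dots> = (\<Sum>i<p. \<Sum>j<p. w i * v j * (\<integral>z. D z i * D z j \<partial>M))"
    by simp
  also have "\<dots> = ipv p w (mv p (cov_matrix M Y) v)"
    unfolding ipv_def mv_def cov_matrix_def D_def
    by (simp add: sum_distrib_left algebra_simps)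
  finally show ?thesis unfolding D_def by simp
qed



lemma D_sq:
  fixes Y :: "'a \<Rightarrow> nat \<Rightarrow> real"
  assumes ps: "prob_space M"
    and meas: "\<And>i. i < p \<Longrightarrow> (\<lambda>z. Y z i) \<in> borel_measurable M"
    and sq: "\<And>i. i < p \<Longrightarrow> integrable M (\<lambda>z. Y z i ^ 2)"
    and i: "i < p"
  shows "integrable M (\<lambda>z. (Y z i - mean_vec M Y i) ^ 2)"
proof -
  interpret prob_space M by fact
  have Yi: "integrable M (\<lambda>z. Y z i)"
    by (rule fm_int_of_sq[OF _ meas[OF i] sq[OF i]]) unfold_locales
  have "integrable M (\<lambda>z. Y z i ^ 2 + (mean_vec M Y i)^2 - 2 * Y z i * mean_vec M Y i)"
    using sq[OF i] Yi by auto
  then show ?thesis by (simp add: power2_diff)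
qed

lemma ipv_meas:
  assumes "\<And>i. i < p \<Longrightarrow> (\<lambda>z. Y z i) \<in> borel_measurable M"
  shows "(\<lambda>z. ipv p (Y z) v) \<in> borel_measurable M"
  unfolding ipv_def using assms by (intro borel_measurable_sum) auto

lemma ipv_sq_int:
  assumes "\<And>i. i < p \<Longrightarrow> (\<lambda>z. Y z i) \<in> borel_measurable M"
    and "\<And>i. i < p \<Longrightarrow> integrable M (\<lambda>z. Y z i ^ 2)"
  shows "integrable M (\<lambda>z. ipv p (Y z) v ^ 2)"
  unfolding ipv_def
proof (rule int_sum_sq)
  fix i assume "i \<in> {..<p}"
  then have i: "i < p" by simp
  show "(\<lambda>z. Y z i * v i) \<in> borel_measurable M" using assms(1)[OF i] by measurable
  have "integrable M (\<lambda>z. (v i)^2 * Y z i ^ 2)" using assms(2)[OF i] by simp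
  then show "integrable M (\<lambda>z. (Y z i * v i)^2)" by (simp add: power_mult_distrib mult.commute)
qed simp

lemma ipv_4_int:
  assumes "\<And>i. i < p \<Longrightarrow> (\<lambda>z. Y z i) \<in> borel_measurable M"
    and "\<And>i. i < p \<Longrightarrow> integrable M (\<lambda>z. Y z i ^ 4)"
  shows "integrable M (\<lambda>z. ipv p (Y z) v ^ 4)"
  unfolding ipv_def
proof (rule int_sum_4)
  fix i assume "i \<in> {..<p}"
  then have i: "i < p" by simp
  show "(\<lambda>z. Y z i * v i) \<in> borel_measurable M" using assms(1)[OF i] by measurable
  have "integrable M (\<lambda>z. (v i)^4 * Y z i ^ 4)" using assms(2)[OF i] by simp
  then show "integrable M (\<lambda>z. (Y z i * v i)^4)" by (simp add: power_mult_distrib mult.commute)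
qed simp

lemma var_le:
  fixes Y :: "'a \<Rightarrow> nat \<Rightarrow> real"
  assumes ps: "prob_space M"
    and meas: "\<And>i. i < p \<Longrightarrow> (\<lambda>z. Y z i) \<in> borel_measurable M"
    and sq: "\<And>i. i < p \<Longrightarrow> integrable M (\<lambda>z. Y z i ^ 2)"
  shows "(\<integral>z. ipv p (\<lambda>i. Y z i - mean_vec M Y i) v ^ 2 \<partial>M) \<le> (\<integral>z. ipv p (Y z) v ^ 2 \<partial>M)"
proof -
  interpret prob_space M by fact
  define X where "X = (\<lambda>z. ipv p (Y z) v)"
  have Xm: "X \<in> borel_measurable M" unfolding X_def by (rule ipv_meas[OF meas])
  have X2: "integrable M (\<lambda>z. X z ^ 2)" unfolding X_def by (rule ipv_sq_int[OF meas sq])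
  have X1: "integrable M X"
    by (rule fm_int_of_sq[OF _ Xm X2]) unfold_locales
  have Yi: "integrable M (\<lambda>z. Y z i)" if "i < p" for i
    by (rule fm_int_of_sq[OF _ meas[OF that] sq[OF that]]) unfold_locales
  have EX: "expectation X = ipv p (mean_vec M Y) v"
  proof -
    have "expectation X = (\<Sum>i<p. (\<integral>z. Y z i \<partial>M) * v i)"
      unfolding X_def ipv_def by (simp add: Yi)
    also have "\<dots> = ipv p (mean_vec M Y) v"
      unfolding ipv_def mean_vec_def by simp
    finally show ?thesis .
  qed
  have eq: "ipv p (\<lambda>i. Y z i - mean_vec M Y i) v = X z - expectation X" for z
    unfolding EX by (simp add: X_def ipv_def sum_subtractf left_diff_distrib)
  have "(\<integral>z. ipv p (\<lambda>i. Y z i - mean_vec M Y i) v ^ 2 \<partial>M) = variance X"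
    unfolding eq by simp
  also have "\<dots> = expectation (\<lambda>z. X z ^ 2) - (expectation X)^2"
    by (rule variance_eq[OF X1 X2])
  also have "\<dots> \<le> expectation (\<lambda>z. X z ^ 2)" by simp
  finally show ?thesis unfolding X_def .
qed

lemma cov_opnorm_le:
  fixes Y :: "'a \<Rightarrow> nat \<Rightarrow> real"
  assumes ps: "prob_space M"
    and meas: "\<And>i. i < p \<Longrightarrow> (\<lambda>z. Y z i) \<in> borel_measurable M"
    and sq: "\<And>i. i < p \<Longrightarrow> integrable M (\<lambda>z. Y z i ^ 2)"
    and K: "K \<ge> 0"
    and Q: "\<And>v. (\<integral>z. ipv p (Y z) v ^ 2 \<partial>M) \<le> K * vnorm p v ^ 2"
  shows "opnorm p (cov_matrix M Y) \<le> K"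
proof (rule opnorm_le)
  fix v :: "nat \<Rightarrow> real" assume v: "vnorm p v \<le> 1"
  define w where "w = mv p (cov_matrix M Y) v"
  define D where "D = (\<lambda>z i. Y z i - mean_vec M Y i)"
  have Dm: "\<And>i. i < p \<Longrightarrow> (\<lambda>z. D z i) \<in> borel_measurable M"
    unfolding D_def using meas by measurable
  have Ds: "\<And>i. i < p \<Longrightarrow> integrable M (\<lambda>z. D z i ^ 2)"
    unfolding D_def by (rule D_sq[OF ps meas sq])
  have QD: "(\<integral>z. ipv p (D z) u ^ 2 \<partial>M) \<le> K * vnorm p u ^ 2" for u
    using var_le[where M=M and p=p and Y=Y and v=u, OF ps meas sq] Q[of u] unfolding D_def by linarith
  have "vnorm p w ^ 2 = ipv p w (mv p (cov_matrix M Y) v)"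
    unfolding vnorm_sq w_def ..
  also have "\<dots> = (\<integral>z. ipv p (D z) w * ipv p (D z) v \<partial>M)"
    unfolding D_def by (rule cov_bil[OF ps meas sq])
  also have "\<dots> \<le> sqrt (\<integral>z. ipv p (D z) w ^ 2 \<partial>M) * sqrt (\<integral>z. ipv p (D z) v ^ 2 \<partial>M)"
    by (rule int_CS[OF ipv_meas[OF Dm] ipv_meas[OF Dm] ipv_sq_int[OF Dm Ds] ipv_sq_int[OF Dm Ds]])
  also have "\<dots> \<le> sqrt (K * vnorm p w ^ 2) * sqrt (K * vnorm p v ^ 2)"
    by (intro mult_mono real_sqrt_le_mono QD) (use K in auto)
  also have "\<dots> = K * vnorm p w * vnorm p v"
    using K vnorm_nonneg[of p w] vnorm_nonneg[of p v] by (simp add: real_sqrt_mult)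
  also have "\<dots> \<le> K * vnorm p w"
    using K vnorm_nonneg[of p w] v by (simp add: mult_left_le)
  finally have h: "vnorm p w ^ 2 \<le> K * vnorm p w" .
  show "vnorm p (mv p (cov_matrix M Y) v) \<le> K"
  proof (cases "vnorm p w = 0")
    case True then show ?thesis using K w_def by simp
  next
    case False
    then have "vnorm p w > 0" using vnorm_nonneg[of p w] by simp
    then show ?thesis using h unfolding w_def[symmetric] by (simp add: power2_eq_square)
  qed
qed



lemma ipv_upd: "i < p \<Longrightarrow> ipv p x (\<theta>(i:=t)) = ipv p x \<theta> + x i * (t - \<theta> i)"
proof -
  assume i: "i < p"
  have "(\<lambda>j. x j * (\<theta>(i:=t)) j) = (\<lambda>j. x j * \<theta> j + (if j = i then x i * (t - \<theta> i) else 0))"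
    by (auto simp: fun_eq_iff algebra_simps)
  then have "ipv p x (\<theta>(i:=t)) = (\<Sum>j<p. x j * \<theta> j + (if j = i then x i * (t - \<theta> i) else 0))"
    unfolding ipv_def by (rule arg_cong)
  also have "\<dots> = ipv p x \<theta> + (\<Sum>j<p. (if j = i then x i * (t - \<theta> i) else 0))"
    unfolding ipv_def by (rule sum.distrib)
  also have "(\<Sum>j<p. (if j = i then x i * (t - \<theta> i) else 0)) = x i * (t - \<theta> i)"
    using i by (subst sum.delta) auto
  finally show ?thesis .
qed

lemma ipv_upd2: "\<not> i < p \<Longrightarrow> ipv p x (\<theta>(i:=t)) = ipv p x \<theta>"
  by (rule ipv_cong) auto

lemma grad_eq:
  assumes d: "\<forall>t. (\<Phi> has_real_derivative \<Phi>1 t) (at t)"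
  shows "grad_Lbar p \<Phi> \<theta> z i = (if i < p then (\<Phi>1 (ipv p (fst z) \<theta>) - snd z) * fst z i else 0)"
proof (cases "i < p")
  case True
  define c where "c = ipv p (fst z) \<theta>"
  define xi where "xi = fst z i"
  define y where "y = snd z"
  have f: "(\<lambda>t. Lbar p \<Phi> (\<theta>(i := t)) z) = (\<lambda>t. - y * (c + xi * (t - \<theta> i)) + \<Phi> (c + xi * (t - \<theta> i)))"
    unfolding Lbar_def c_def xi_def y_def using ipv_upd[OF True] by (simp add: fun_eq_iff)
  have d0: "((\<lambda>t. - y * (c + xi * (t - \<theta> i))) has_real_derivative (- y * xi)) (at (\<theta> i))"
    by (auto intro!: derivative_eq_intros)
  have g: "((\<lambda>t. c + xi * (t - \<theta> i)) has_real_derivative xi) (at (\<theta> i))"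
    by (auto intro!: derivative_eq_intros)
  have p: "DERIV \<Phi> (c + xi * (\<theta> i - \<theta> i)) :> \<Phi>1 c" using d by simp
  have d2: "((\<lambda>t. \<Phi> (c + xi * (t - \<theta> i))) has_real_derivative (\<Phi>1 c * xi)) (at (\<theta> i))"
    by (rule DERIV_chain2[OF p g])
  have "((\<lambda>t. Lbar p \<Phi> (\<theta>(i := t)) z) has_real_derivative (- y * xi + \<Phi>1 c * xi)) (at (\<theta> i))"
    unfolding f by (rule DERIV_add[OF d0 d2])
  then have "grad_Lbar p \<Phi> \<theta> z i = - y * xi + \<Phi>1 c * xi"
    unfolding grad_Lbar_def by (rule DERIV_imp_deriv)
  then show ?thesis using True unfolding c_def xi_def y_def by (simp add: algebra_simps)
next
  case False
  have "(\<lambda>t. Lbar p \<Phi> (\<theta>(i := t)) z) = (\<lambda>t. Lbar p \<Phi> \<theta> z)"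
    unfolding Lbar_def using ipv_upd2[OF False] by simp
  then show ?thesis using False unfolding grad_Lbar_def by (simp add: DERIV_imp_deriv)
qed

lemma L4_prod:
  fixes f g :: "'a \<Rightarrow> real"
  assumes "f \<in> borel_measurable M" "g \<in> borel_measurable M"
    "integrable M (\<lambda>z. f z ^ 4)" "integrable M (\<lambda>z. g z ^ 4)"
  shows "integrable M (\<lambda>z. (f z * g z) ^ 2)"
proof -
  have "integrable M (\<lambda>z. f z ^ 2 * g z ^ 2)"
    by (rule int_prod_of_sq) (use assms in \<open>auto simp: power_mult[symmetric]\<close>)
  then show ?thesis by (simp add: power_mult_distrib)
qed

lemma diff_sq_int:
  fixes f g :: "'a \<Rightarrow> real"
  assumes "f \<in> borel_measurable M" "g \<in> borel_measurable M"
    "integrable M (\<lambda>z. f z ^ 2)" "integrable M (\<lambda>z. g z ^ 2)"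
  shows "integrable M (\<lambda>z. (f z - g z) ^ 2)"
proof -
  have "integrable M (\<lambda>z. 2 * f z ^ 2 + 2 * g z ^ 2)" using assms by auto
  then show ?thesis
  proof (rule int_bound_real)
    show "(\<lambda>z. (f z - g z) ^ 2) \<in> borel_measurable M" using assms by measurable
    fix x
    show "\<bar>(f x - g x)\<^sup>2\<bar> \<le> 2 * (f x)\<^sup>2 + 2 * (g x)\<^sup>2"
      using sum_sq_le[of "f x" "- g x"] by simp
  qed
qed



lemma sq_sq: "((x::real)^2)^2 = x^4"
proof -
  have "x^4 = x^(2*2)" by simp
  also have "\<dots> = (x^2)^2" by (rule power_mult)
  finally show ?thesis by simp
qed

lemma main_bound:
  assumes H: "glm_hyps p M C4 \<Phi> \<Phi>1 \<Phi>2 \<Phi>3 \<Phi>4 \<theta>s c L2 L4 B2 B4 M22 M41"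
  shows "opnorm p (cov_matrix M (\<lambda>z. grad_Lbar p \<Phi> \<theta> z))
     \<le> 2 * sqrt \<bar>C4\<bar> * opnorm p (cov_matrix M fst) *
        (sqrt L4 * vnorm p (\<lambda>i. \<theta> i - \<theta>s i) ^ 2 + sqrt B4 + c * sqrt (3 * M22) + sqrt (c ^ 3 * M41))"
proof -
  have ps: "prob_space M" using H unfolding glm_hyps_def by blast
  interpret prob_space M by (rule ps)
  have Msets: "sets M = sets (PiM {..<p} (\<lambda>_. borel) \<Otimes>\<^sub>M (borel :: real measure))"
    using H unfolding glm_hyps_def by blast
  have x4: "\<And>i. i < p \<Longrightarrow> integrable M (\<lambda>z. fst z i ^ 4)" using H unfolding glm_hyps_def by blast
  have mean0: "\<And>i. i < p \<Longrightarrow> (\<integral>z. fst z i \<partial>M) = 0" using H unfolding glm_hyps_def by blast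
  have bmom: "bounded_moments M p fst 2 C4" using H unfolding glm_hyps_def by blast
  have dP: "\<forall>t. (\<Phi> has_real_derivative \<Phi>1 t) (at t)" using H unfolding glm_hyps_def by blast
  have dP1: "\<forall>t. (\<Phi>1 has_real_derivative \<Phi>2 t) (at t)" using H unfolding glm_hyps_def by blast
  have c0: "c > 0" using H unfolding glm_hyps_def by blast
  have b4i: "integrable M (\<lambda>z. (snd z - \<Phi>1 (ipv p (fst z) \<theta>s)) ^ 4)" using H unfolding glm_hyps_def by blast
  have ce: "AE z in M. real_cond_exp M (sigma_x p M) (\<lambda>z. (snd z - \<Phi>1 (ipv p (fst z) \<theta>s)) ^ 4) z
                 = c ^ 3 * \<Phi>4 (ipv p (fst z) \<theta>s) + 3 * c\<^sup>2 * (\<Phi>2 (ipv p (fst z) \<theta>s))\<^sup>2"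
    using H unfolding glm_hyps_def by blast
  have L4h: "integrable M (\<lambda>z. \<bar>\<Phi>1 (ipv p (fst z) \<theta>) - \<Phi>1 (ipv p (fst z) \<theta>s)\<bar> ^ 4) \<and>
          (\<integral>z. \<bar>\<Phi>1 (ipv p (fst z) \<theta>) - \<Phi>1 (ipv p (fst z) \<theta>s)\<bar> ^ 4 \<partial>M)
            \<le> L4 * vnorm p (\<lambda>i. \<theta> i - \<theta>s i) ^ 4 + B4"
    using H unfolding glm_hyps_def by blast
  have L4B4: "L4 \<ge> 0" "B4 \<ge> 0" using H unfolding glm_hyps_def by blast+
  have M22h: "integrable M (\<lambda>z. \<bar>\<Phi>2 (ipv p (fst z) \<theta>s)\<bar> ^ 2)"
     "(\<integral>z. \<bar>\<Phi>2 (ipv p (fst z) \<theta>s)\<bar> ^ 2 \<partial>M) \<le> M22"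
    using H unfolding glm_hyps_def by blast+
  have M41h: "integrable M (\<lambda>z. \<bar>\<Phi>4 (ipv p (fst z) \<theta>s)\<bar>)"
     "(\<integral>z. \<bar>\<Phi>4 (ipv p (fst z) \<theta>s)\<bar> \<partial>M) \<le> M41"
    using H unfolding glm_hyps_def by blast+

  have fstM: "fst \<in> measurable M (PiM {..<p} (\<lambda>_. borel))"
    unfolding measurable_cong_sets[OF Msets refl] by (rule measurable_fst)
  have sndM: "snd \<in> borel_measurable M"
    unfolding measurable_cong_sets[OF Msets refl] by (rule measurable_snd)
  have xm: "\<And>i. i < p \<Longrightarrow> (\<lambda>z. fst z i) \<in> borel_measurable M"
    using measurable_compose[OF fstM measurable_component_singleton] by auto
  have etam: "\<And>v. (\<lambda>z. ipv p (fst z) v) \<in> borel_measurable M"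
    by (rule ipv_meas[OF xm])
  have P1c: "continuous_on UNIV \<Phi>1"
    using dP1 DERIV_isCont continuous_at_imp_continuous_on by blast
  have P1m: "\<Phi>1 \<in> borel_measurable borel" by (rule borel_measurable_continuous_onI[OF P1c])
  have P1eta: "\<And>v. (\<lambda>z. \<Phi>1 (ipv p (fst z) v)) \<in> borel_measurable M"
    using measurable_compose[OF etam P1m] by simp

  define X where "X = (\<lambda>v (z::(nat \<Rightarrow> real) \<times> real). ipv p (fst z) v)"
  define a where "a = (\<lambda>z::(nat \<Rightarrow> real) \<times> real. \<Phi>1 (ipv p (fst z) \<theta>) - \<Phi>1 (ipv p (fst z) \<theta>s))"
  define b where "b = (\<lambda>z. snd z - \<Phi>1 (ipv p (fst z) \<theta>s))"
  define nD where "nD = vnorm p (\<lambda>i. \<theta> i - \<theta>s i)"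
  define S where "S = opnorm p (cov_matrix M fst)"
  have S0: "S \<ge> 0" unfolding S_def by (rule opnorm_nonneg)
  have am: "a \<in> borel_measurable M" unfolding a_def using P1eta by measurable
  have bm: "b \<in> borel_measurable M" unfolding b_def using P1eta sndM by measurable
  have Xm: "\<And>v. X v \<in> borel_measurable M" unfolding X_def by (rule etam)
  have a4: "integrable M (\<lambda>z. a z ^ 4)" using L4h unfolding a_def by simp
  have a4b: "(\<integral>z. a z ^ 4 \<partial>M) \<le> L4 * nD ^ 4 + B4" using L4h unfolding a_def nD_def by simp
  have b4: "integrable M (\<lambda>z. b z ^ 4)" using b4i unfolding b_def by simp
  have x2: "\<And>i. i < p \<Longrightarrow> integrable M (\<lambda>z. fst z i ^ 2)"
  proof -
    fix i assume i: "i < p"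
    have "integrable M (\<lambda>z. (fst z i ^ 2) ^ 2)" using x4[OF i] by (simp only: sq_sq)
    moreover have "(\<lambda>z. fst z i ^ 2) \<in> borel_measurable M" using xm[OF i] by measurable
    ultimately show "integrable M (\<lambda>z. fst z i ^ 2)"
      using fm_int_of_sq[OF finite_measure_axioms] by blast
  qed
  have X4: "\<And>v. integrable M (\<lambda>z. X v z ^ 4)" unfolding X_def by (rule ipv_4_int[OF xm x4])
  have X2: "\<And>v. integrable M (\<lambda>z. X v z ^ 2)" unfolding X_def by (rule ipv_sq_int[OF xm x2])

  have EX2: "(\<integral>z. X v z ^ 2 \<partial>M) \<le> S * vnorm p v ^ 2" for v
  proof -
    have "ipv p v (mv p (cov_matrix M fst) v)
       = (\<integral>z. ipv p (\<lambda>i. fst z i - mean_vec M fst i) v * ipv p (\<lambda>i. fst z i - mean_vec M fst i) v \<partial>M)"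
      by (rule cov_bil[OF ps xm x2])
    also have "\<dots> = (\<integral>z. X v z ^ 2 \<partial>M)"
    proof -
      have "ipv p (\<lambda>i. fst z i - mean_vec M fst i) v = X v z" for z
        unfolding X_def by (rule ipv_cong) (auto simp: mean_vec_def mean0)
      then show ?thesis by (simp add: power2_eq_square)
    qed
    finally have e: "(\<integral>z. X v z ^ 2 \<partial>M) = ipv p v (mv p (cov_matrix M fst) v)" ..
    also have "\<dots> \<le> vnorm p v * vnorm p (mv p (cov_matrix M fst) v)" by (rule ipv_CS)
    also have "\<dots> \<le> vnorm p v * (S * vnorm p v)"
      unfolding S_def by (intro mult_left_mono opnorm_bound vnorm_nonneg)
    finally show ?thesis by (simp add: power2_eq_square algebra_simps)
  qed
  have EX20: "0 \<le> (\<integral>z. X v z ^ 2 \<partial>M)" for v by simp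
  have EX4: "(\<integral>z. X v z ^ 4 \<partial>M) \<le> C4 * (\<integral>z. X v z ^ 2 \<partial>M) ^ 2" for v
  proof (cases "vnorm p v = 0")
    case True
    have "X v z = 0" for z unfolding X_def ipv_def using vnorm_zero[OF True] by simp
    then show ?thesis by simp
  next
    case False
    define n where "n = vnorm p v"
    have n: "n > 0" using False vnorm_nonneg[of p v] unfolding n_def by simp
    define u where "u = (\<lambda>i. (1/n) * v i)"
    have un: "vnorm p u = 1" unfolding u_def vnorm_scale n_def using n n_def by simp
    have Xu: "X u z = (1/n) * X v z" for z
      unfolding X_def ipv_def u_def by (simp add: sum_distrib_left algebra_simps)
    have cg: "ipv p (\<lambda>i. fst z i - mean_vec M fst i) u = X u z" for z
      unfolding X_def by (rule ipv_cong) (auto simp: mean_vec_def mean0)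
    have bu: "(\<integral>z. ipv p (\<lambda>i. fst z i - mean_vec M fst i) u ^ 4 \<partial>M) \<le> C4 * (\<integral>z. ipv p (\<lambda>i. fst z i - mean_vec M fst i) u ^ 2 \<partial>M) ^ 2"
      using bmom un unfolding bounded_moments_def by auto
    have "(\<integral>z. X u z ^ 4 \<partial>M) \<le> C4 * (\<integral>z. X u z ^ 2 \<partial>M) ^ 2"
      using bu unfolding cg .
    moreover have e4: "(\<integral>z. X u z ^ 4 \<partial>M) = (1/n)^4 * (\<integral>z. X v z ^ 4 \<partial>M)"
      unfolding Xu power_mult_distrib by (rule integral_mult_right_zero)
    moreover have e2: "(\<integral>z. X u z ^ 2 \<partial>M) = (1/n)^2 * (\<integral>z. X v z ^ 2 \<partial>M)"
      unfolding Xu power_mult_distrib by (rule integral_mult_right_zero)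
    moreover have "((1/n)^2 * (\<integral>z. X v z ^ 2 \<partial>M))^2 = (1/n)^4 * (\<integral>z. X v z ^ 2 \<partial>M)^2"
      by (simp only: power_mult_distrib sq_sq)
    ultimately have "(1/n)^4 * (\<integral>z. X v z ^ 4 \<partial>M) \<le> (1/n)^4 * (C4 * (\<integral>z. X v z ^ 2 \<partial>M) ^ 2)"
      by (simp only: mult.left_commute[of C4])
    then show ?thesis using n by (simp add: mult_le_cancel_left_pos)
  qed
  have EX4s: "sqrt (\<integral>z. X v z ^ 4 \<partial>M) \<le> sqrt \<bar>C4\<bar> * (S * vnorm p v ^ 2)" for v
  proof -
    have "(\<integral>z. X v z ^ 4 \<partial>M) \<le> \<bar>C4\<bar> * (\<integral>z. X v z ^ 2 \<partial>M) ^ 2"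
      using EX4[of v] mult_right_mono[OF abs_ge_self[of C4] zero_le_power2[of "\<integral>z. X v z ^ 2 \<partial>M"]] by linarith
    also have "\<dots> \<le> \<bar>C4\<bar> * (S * vnorm p v ^ 2) ^ 2"
      by (intro mult_left_mono power_mono EX2 EX20) auto
    finally have "sqrt (\<integral>z. X v z ^ 4 \<partial>M) \<le> sqrt (\<bar>C4\<bar> * (S * vnorm p v ^ 2) ^ 2)"
      by (rule real_sqrt_le_mono)
    also have "\<dots> = sqrt \<bar>C4\<bar> * (S * vnorm p v ^ 2)"
      using S0 by (simp add: real_sqrt_mult)
    finally show ?thesis .
  qed

  have "0 \<le> (\<integral>z. \<bar>\<Phi>2 (ipv p (fst z) \<theta>s)\<bar> ^ 2 \<partial>M)" by (rule Bochner_Integration.integral_nonneg) simp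
  then have M22_0: "M22 \<ge> 0" using M22h(2) by linarith
  have "0 \<le> (\<integral>z. \<bar>\<Phi>4 (ipv p (fst z) \<theta>s)\<bar> \<partial>M)" by (rule Bochner_Integration.integral_nonneg) simp
  then have M41_0: "M41 \<ge> 0" using M41h(2) by linarith
  have Eb4: "(\<integral>z. b z ^ 4 \<partial>M) \<le> c ^ 3 * M41 + 3 * c\<^sup>2 * M22"
  proof -
    have subalg: "subalgebra M (sigma_x p M)"
      unfolding subalgebra_def sigma_x_def
      using fstM unfolding measurable_iff_sets by simp
    have fms: "finite_measure_subalgebra M (sigma_x p M)"
      unfolding finite_measure_subalgebra_def finite_measure_subalgebra_axioms_def
      using subalg finite_measure_axioms by simp
    interpret sigma_finite_subalgebra M "sigma_x p M"
      by (rule finite_measure_subalgebra_is_sigma_finite[OF fms])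
    have "(\<integral>z. b z ^ 4 \<partial>M) = (\<integral>z. real_cond_exp M (sigma_x p M) (\<lambda>z. b z ^ 4) z \<partial>M)"
      using real_cond_exp_int(2)[OF b4] by simp
    also have "\<dots> \<le> (\<integral>z. c ^ 3 * \<bar>\<Phi>4 (ipv p (fst z) \<theta>s)\<bar> + 3 * c\<^sup>2 * \<bar>\<Phi>2 (ipv p (fst z) \<theta>s)\<bar> ^ 2 \<partial>M)"
    proof (rule integral_mono_AE)
      show "integrable M (real_cond_exp M (sigma_x p M) (\<lambda>z. b z ^ 4))"
        by (rule real_cond_exp_int(1)[OF b4])
      show "integrable M (\<lambda>z. c ^ 3 * \<bar>\<Phi>4 (ipv p (fst z) \<theta>s)\<bar> + 3 * c\<^sup>2 * \<bar>\<Phi>2 (ipv p (fst z) \<theta>s)\<bar> ^ 2)"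
        using M22h(1) M41h(1) by auto
      show "AE z in M. real_cond_exp M (sigma_x p M) (\<lambda>z. b z ^ 4) z
          \<le> c ^ 3 * \<bar>\<Phi>4 (ipv p (fst z) \<theta>s)\<bar> + 3 * c\<^sup>2 * \<bar>\<Phi>2 (ipv p (fst z) \<theta>s)\<bar> ^ 2"
        using ce
      proof eventually_elim
        case (elim z)
        have "c ^ 3 * \<Phi>4 (ipv p (fst z) \<theta>s) \<le> c ^ 3 * \<bar>\<Phi>4 (ipv p (fst z) \<theta>s)\<bar>"
          using c0 by (intro mult_left_mono) auto
        then show ?case using elim unfolding b_def by simp
      qed
    qed
    also have "\<dots> = c ^ 3 * (\<integral>z. \<bar>\<Phi>4 (ipv p (fst z) \<theta>s)\<bar> \<partial>M) + 3 * c\<^sup>2 * (\<integral>z. \<bar>\<Phi>2 (ipv p (fst z) \<theta>s)\<bar> ^ 2 \<partial>M)"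
      using M22h(1) M41h(1) by simp
    also have "\<dots> \<le> c ^ 3 * M41 + 3 * c\<^sup>2 * M22"
      using M22h(2) M41h(2) c0 by (intro add_mono mult_left_mono) auto
    finally show ?thesis .
  qed
  have Eb4s: "sqrt (\<integral>z. b z ^ 4 \<partial>M) \<le> c * sqrt (3 * M22) + sqrt (c ^ 3 * M41)"
  proof -
    have "sqrt (\<integral>z. b z ^ 4 \<partial>M) \<le> sqrt (3 * c\<^sup>2 * M22 + c ^ 3 * M41)"
      using Eb4 by (intro real_sqrt_le_mono) simp
    also have "\<dots> \<le> sqrt (3 * c\<^sup>2 * M22) + sqrt (c ^ 3 * M41)"
      using c0 M22_0 M41_0 by (intro sqrt_add_le_add_sqrt) auto
    also have "sqrt (3 * c\<^sup>2 * M22) = c * sqrt (3 * M22)"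
      using c0 by (simp add: real_sqrt_mult)
    finally show ?thesis .
  qed
  have Ea4s: "sqrt (\<integral>z. a z ^ 4 \<partial>M) \<le> sqrt L4 * nD ^ 2 + sqrt B4"
  proof -
    have "sqrt (\<integral>z. a z ^ 4 \<partial>M) \<le> sqrt (L4 * nD ^ 4 + B4)"
      using a4b by (rule real_sqrt_le_mono)
    also have "\<dots> \<le> sqrt (L4 * nD ^ 4) + sqrt B4"
      using L4B4 by (intro sqrt_add_le_add_sqrt) auto
    also have "sqrt (L4 * nD ^ 4) = sqrt L4 * nD ^ 2"
    proof -
      have "sqrt ((nD ^ 2) ^ 2) = \<bar>nD ^ 2\<bar>" by (rule real_sqrt_abs)
      also have "\<bar>nD ^ 2\<bar> = nD ^ 2" by simp
      finally have "sqrt ((nD ^ 2) ^ 2) = nD ^ 2" .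
      then have "sqrt (nD ^ 4) = nD ^ 2" unfolding sq_sq .
      then show ?thesis by (simp add: real_sqrt_mult)
    qed
    finally show ?thesis .
  qed

  define T where "T = sqrt L4 * nD ^ 2 + sqrt B4 + c * sqrt (3 * M22) + sqrt (c ^ 3 * M41)"
  define K where "K = 2 * sqrt \<bar>C4\<bar> * S * T"
  have T0: "T \<ge> 0" unfolding T_def using c0 M22_0 M41_0 L4B4 by (intro add_nonneg_nonneg) auto
  have K0: "K \<ge> 0" unfolding K_def using S0 T0 by simp

  have grad: "\<And>z i. i < p \<Longrightarrow> grad_Lbar p \<Phi> \<theta> z i = (a z - b z) * fst z i"
    using grad_eq[OF dP] unfolding a_def b_def by simp
  have gm: "\<And>i. i < p \<Longrightarrow> (\<lambda>z. grad_Lbar p \<Phi> \<theta> z i) \<in> borel_measurable M"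
  proof -
    fix i assume i: "i < p"
    have "(\<lambda>z. (a z - b z) * fst z i) \<in> borel_measurable M" using am bm xm[OF i] by measurable
    then show "(\<lambda>z. grad_Lbar p \<Phi> \<theta> z i) \<in> borel_measurable M" using grad[OF i] by simp
  qed
  have gsq: "\<And>i. i < p \<Longrightarrow> integrable M (\<lambda>z. grad_Lbar p \<Phi> \<theta> z i ^ 2)"
  proof -
    fix i assume i: "i < p"
    have "integrable M (\<lambda>z. (a z * fst z i - b z * fst z i) ^ 2)"
      by (intro diff_sq_int L4_prod) (use am bm xm[OF i] a4 b4 x4[OF i] in \<open>auto\<close>)
    then show "integrable M (\<lambda>z. grad_Lbar p \<Phi> \<theta> z i ^ 2)" using grad[OF i] by (simp add: left_diff_distrib)
  qed
  have Q: "(\<integral>z. ipv p (grad_Lbar p \<Phi> \<theta> z) v ^ 2 \<partial>M) \<le> K * vnorm p v ^ 2" for v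
  proof -
    have ip: "ipv p (grad_Lbar p \<Phi> \<theta> z) v = a z * X v z - b z * X v z" for z
    proof -
      have "ipv p (grad_Lbar p \<Phi> \<theta> z) v = (\<Sum>i<p. (a z - b z) * (fst z i * v i))"
        unfolding ipv_def by (rule sum.cong) (auto simp: grad)
      also have "\<dots> = (a z - b z) * X v z" unfolding X_def ipv_def by (rule sum_distrib_left[symmetric])
      finally show ?thesis by (simp add: left_diff_distrib)
    qed
    have aX: "integrable M (\<lambda>z. (a z * X v z) ^ 2)" by (rule L4_prod[OF am Xm a4 X4])
    have bX: "integrable M (\<lambda>z. (b z * X v z) ^ 2)" by (rule L4_prod[OF bm Xm b4 X4])
    have CSa: "(\<integral>z. (a z * X v z) ^ 2 \<partial>M) \<le> sqrt (\<integral>z. a z ^ 4 \<partial>M) * sqrt (\<integral>z. X v z ^ 4 \<partial>M)"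
    proof -
      have "(\<integral>z. a z ^ 2 * X v z ^ 2 \<partial>M) \<le> sqrt (\<integral>z. (a z ^ 2) ^ 2 \<partial>M) * sqrt (\<integral>z. (X v z ^ 2) ^ 2 \<partial>M)"
        by (rule int_CS) (use am Xm a4 X4 in \<open>auto simp: power_mult[symmetric]\<close>)
      then show ?thesis by (simp add: power_mult_distrib power_mult[symmetric])
    qed
    have CSb: "(\<integral>z. (b z * X v z) ^ 2 \<partial>M) \<le> sqrt (\<integral>z. b z ^ 4 \<partial>M) * sqrt (\<integral>z. X v z ^ 4 \<partial>M)"
    proof -
      have "(\<integral>z. b z ^ 2 * X v z ^ 2 \<partial>M) \<le> sqrt (\<integral>z. (b z ^ 2) ^ 2 \<partial>M) * sqrt (\<integral>z. (X v z ^ 2) ^ 2 \<partial>M)"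
        by (rule int_CS) (use bm Xm b4 X4 in \<open>auto simp: power_mult[symmetric]\<close>)
      then show ?thesis by (simp add: power_mult_distrib power_mult[symmetric])
    qed
    define Z where "Z = sqrt \<bar>C4\<bar> * (S * vnorm p v ^ 2)"
    have Z0: "Z \<ge> 0" unfolding Z_def using S0 by simp
    have "(\<integral>z. ipv p (grad_Lbar p \<Phi> \<theta> z) v ^ 2 \<partial>M) = (\<integral>z. (a z * X v z - b z * X v z) ^ 2 \<partial>M)"
      unfolding ip ..
    also have "\<dots> \<le> (\<integral>z. 2 * (a z * X v z) ^ 2 + 2 * (b z * X v z) ^ 2 \<partial>M)"
    proof (rule integral_mono)
      show "integrable M (\<lambda>z. (a z * X v z - b z * X v z)\<^sup>2)"
        by (intro diff_sq_int aX bX) (use am bm Xm in measurable)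
      show "integrable M (\<lambda>z. 2 * (a z * X v z)\<^sup>2 + 2 * (b z * X v z)\<^sup>2)" using aX bX by auto
      fix z show "(a z * X v z - b z * X v z)\<^sup>2 \<le> 2 * (a z * X v z)\<^sup>2 + 2 * (b z * X v z)\<^sup>2"
        using sum_sq_le[of "a z * X v z" "- (b z * X v z)"] by simp
    qed
    also have "\<dots> = 2 * (\<integral>z. (a z * X v z) ^ 2 \<partial>M) + 2 * (\<integral>z. (b z * X v z) ^ 2 \<partial>M)"
      using aX bX by simp
    also have "\<dots> \<le> 2 * ((sqrt L4 * nD ^ 2 + sqrt B4) * Z) + 2 * ((c * sqrt (3 * M22) + sqrt (c ^ 3 * M41)) * Z)"
    proof -
      have "(\<integral>z. (a z * X v z) ^ 2 \<partial>M) \<le> (sqrt L4 * nD ^ 2 + sqrt B4) * Z"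
        using CSa unfolding Z_def
        by (rule order_trans) (intro mult_mono Ea4s EX4s; simp add: L4B4)
      moreover have "(\<integral>z. (b z * X v z) ^ 2 \<partial>M) \<le> (c * sqrt (3 * M22) + sqrt (c ^ 3 * M41)) * Z"
        using CSb unfolding Z_def
        by (rule order_trans) (intro mult_mono Eb4s EX4s; use c0 M22_0 M41_0 in simp)
      ultimately show ?thesis by simp
    qed
    also have "\<dots> = K * vnorm p v ^ 2"
      unfolding K_def T_def Z_def by (simp add: algebra_simps)
    finally show ?thesis .
  qed
  have "opnorm p (cov_matrix M (\<lambda>z. grad_Lbar p \<Phi> \<theta> z)) \<le> K"
    by (rule cov_opnorm_le[OF ps gm gsq K0 Q])
  then show ?thesis unfolding K_def T_def S_def nD_def .
qed


theorem mainTheorem5: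
  fixes C4 :: real
  shows "\<exists>C1 C2. C1 > 0 \<and> C2 > 0 \<and>
    (\<forall>p M \<Phi> \<Phi>1 \<Phi>2 \<Phi>3 \<Phi>4 \<theta>s c L2 L4 B2 B4 M22 M41.
       glm_hyps p M C4 \<Phi> \<Phi>1 \<Phi>2 \<Phi>3 \<Phi>4 \<theta>s c L2 L4 B2 B4 M22 M41 \<longrightarrow>
       (\<forall>\<theta>. opnorm p (cov_matrix M (\<lambda>z. grad_Lbar p \<Phi> \<theta> z))
         \<le> C1 * vnorm p (\<lambda>i. \<theta> i - \<theta>s i) ^ 2 * opnorm p (cov_matrix M fst) * (sqrt L4 + L2)
           + C2 * opnorm p (cov_matrix M fst)
               * (B2 + sqrt B4 + c * sqrt (3 * M22) + sqrt (c ^ 3 * M41))))"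
proof (rule exI[of _ "2 * sqrt \<bar>C4\<bar> + 1"], rule exI[of _ "2 * sqrt \<bar>C4\<bar> + 1"], intro conjI allI impI)
  define C where "C = 2 * sqrt \<bar>C4\<bar> + 1"
  have C0': "2 * sqrt \<bar>C4\<bar> + 1 > (0::real)" by (simp add: add_nonneg_pos)
  then have C0: "C > 0" unfolding C_def .
  show "2 * sqrt \<bar>C4\<bar> + 1 > (0::real)" by (rule C0')
  show "2 * sqrt \<bar>C4\<bar> + 1 > (0::real)" by (rule C0')
  fix p M \<Phi> \<Phi>1 \<Phi>2 \<Phi>3 \<Phi>4 \<theta>s c L2 L4 B2 B4 M22 M41 \<theta>
  assume H: "glm_hyps p M C4 \<Phi> \<Phi>1 \<Phi>2 \<Phi>3 \<Phi>4 \<theta>s c L2 L4 B2 B4 M22 M41"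
  define S where "S = opnorm p (cov_matrix M fst)"
  define nD where "nD = vnorm p (\<lambda>i. \<theta> i - \<theta>s i)"
  define T where "T = sqrt L4 * nD ^ 2 + sqrt B4 + c * sqrt (3 * M22) + sqrt (c ^ 3 * M41)"
  have S0: "S \<ge> 0" unfolding S_def by (rule opnorm_nonneg)
  have c0: "c > 0" and L2: "L2 \<ge> 0" and B2: "B2 \<ge> 0" and L4: "L4 \<ge> 0" and B4: "B4 \<ge> 0"
    using H unfolding glm_hyps_def by blast+
  have M22h: "(\<integral>z. \<bar>\<Phi>2 (ipv p (fst z) \<theta>s)\<bar> ^ 2 \<partial>M) \<le> M22"
    and M41h: "(\<integral>z. \<bar>\<Phi>4 (ipv p (fst z) \<theta>s)\<bar> \<partial>M) \<le> M41"
    using H unfolding glm_hyps_def by blast+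
  have "0 \<le> (\<integral>z. \<bar>\<Phi>2 (ipv p (fst z) \<theta>s)\<bar> ^ 2 \<partial>M)" by (rule Bochner_Integration.integral_nonneg) simp
  then have M22_0: "M22 \<ge> 0" using M22h by linarith
  have "0 \<le> (\<integral>z. \<bar>\<Phi>4 (ipv p (fst z) \<theta>s)\<bar> \<partial>M)" by (rule Bochner_Integration.integral_nonneg) simp
  then have M41_0: "M41 \<ge> 0" using M41h by linarith
  have T0: "T \<ge> 0" unfolding T_def using c0 M22_0 M41_0 L4 B4 by (intro add_nonneg_nonneg) auto
  have "opnorm p (cov_matrix M (\<lambda>z. grad_Lbar p \<Phi> \<theta> z)) \<le> 2 * sqrt \<bar>C4\<bar> * S * T"
    using main_bound[OF H, of \<theta>] unfolding S_def nD_def T_def .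
  also have "\<dots> \<le> C * S * T"
    unfolding C_def using S0 T0 by (intro mult_right_mono) auto
  also have "\<dots> \<le> C * S * T + C * S * (nD ^ 2 * L2 + B2)"
    using C0 S0 L2 B2 by simp
  also have "\<dots> = C * nD ^ 2 * S * (sqrt L4 + L2)
           + C * S * (B2 + sqrt B4 + c * sqrt (3 * M22) + sqrt (c ^ 3 * M41))"
    unfolding T_def by (simp add: algebra_simps)
  finally show "opnorm p (cov_matrix M (\<lambda>z. grad_Lbar p \<Phi> \<theta> z))
         \<le> (2 * sqrt \<bar>C4\<bar> + 1) * vnorm p (\<lambda>i. \<theta> i - \<theta>s i) ^ 2 * opnorm p (cov_matrix M fst) * (sqrt L4 + L2)
           + (2 * sqrt \<bar>C4\<bar> + 1) * opnorm p (cov_matrix M fst)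
               * (B2 + sqrt B4 + c * sqrt (3 * M22) + sqrt (c ^ 3 * M41))"
    unfolding S_def nD_def C_def .
qed

end
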